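(* Let $f:M\to\mathbb{R}^3$ be an immersion of a surface with an eq\"uiaffine transversal vector field $\xi$ and positive definite induced bilinear form $h$, let $(u,v)$ be local isothermal coordinates with $h(\partial_u,\partial_u)=h(\partial_v,\partial_v)=\rho$, $h(\partial_u,\partial_v)=0$, and let $\nu$ be the co-normal ($\nu\cdot f_u=\nu\cdot f_v=0$, $\nu\cdot\xi=1$). Let $(b_{ij})$ be the matrix of the shape operator in these coordinates, i.e. $\xi_u=-b_{11}f_u-b_{21}f_v$, $\xi_v=-b_{12}f_u-b_{22}f_v$. Then $$\begin{pmatrix} b_{11}&b_{12}\\ b_{21}&b_{22}\end{pmatrix}=-\frac{1}{\delta}\begin{pmatrix}\nu_{uu}\cdot\xi & \nu_{uv}\cdot\xi\\ \nu_{uv}\cdot\xi & \nu_{vv}\cdot\xi\end{pmatrix},\qquad \delta=\frac{[f_u,f_v,\xi]\,[\nu,\nu_u,\nu_v]}{\rho}.$$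
   Context: $D$ denotes the flat connection of $\mathbb{R}^3$; $h$, the shape operator $B$ and the $1$-form $\tau$ are defined by $D_Xf_*Y=f_*(\nabla_XY)+h(X,Y)\xi$ and $D_X\xi=-f_*(BX)+\tau(X)\xi$; $\xi$ is eq\"uiaffine if $\tau=0$. $\cdot$ is the Euclidean inner product, $[a,b,c]$ the determinant of three vectors, subscripts denote partial derivatives. *)

theory Defs
  imports "HOL-Analysis.Analysis"
begin

definition det3 :: "real^3 \<Rightarrow> real^3 \<Rightarrow> real^3 \<Rightarrow> real" where
  "det3 a b c = det (vector [a, b, c] :: real^3^3)"

definition has_partials :: "(real \<times> real \<Rightarrow> real^3) \<Rightarrow> (real \<times> real \<Rightarrow> real^3)
    \<Rightarrow> (real \<times> real \<Rightarrow> real^3) \<Rightarrow> (real \<times> real) set \<Rightarrow> bool" where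
  "has_partials F Fu Fv U \<longleftrightarrow>
     (\<forall>p\<in>U. (F has_derivative (\<lambda>(s, t). s *\<^sub>R Fu p + t *\<^sub>R Fv p)) (at p))"

end

theory Submission
  imports Defs
begin

lemma path_u:
  fixes F :: "real \<times> real \<Rightarrow> real^3"
  assumes "(F has_derivative (\<lambda>(s,t). s *\<^sub>R A + t *\<^sub>R B)) (at (p + (x, c)))"
  shows "((\<lambda>x. F (p + (x, c))) has_derivative (\<lambda>t. t *\<^sub>R A)) (at x)"
proof -
  have g: "((\<lambda>x. p + (x, c)) has_derivative (\<lambda>t. (t, 0))) (at x)"
    by (auto intro!: derivative_eq_intros)
  show ?thesis using has_derivative_compose[OF g assms] by (simp add: o_def)
qed

lemma path_v:
  fixes F :: "real \<times> real \<Rightarrow> real^3"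
  assumes "(F has_derivative (\<lambda>(s,t). s *\<^sub>R A + t *\<^sub>R B)) (at (p + (c, x)))"
  shows "((\<lambda>x. F (p + (c, x))) has_derivative (\<lambda>t. t *\<^sub>R B)) (at x)"
proof -
  have g: "((\<lambda>x. p + (c, x)) has_derivative (\<lambda>t. (0, t))) (at x)"
    by (auto intro!: derivative_eq_intros)
  show ?thesis using has_derivative_compose[OF g assms] by (simp add: o_def)
qed

lemma half_bound:
  fixes \<phi> \<phi>' :: "real \<Rightarrow> real^3"
  assumes "h > 0" "\<And>x. x \<in> {0..h} \<Longrightarrow> (\<phi> has_derivative (\<lambda>t. t *\<^sub>R \<phi>' x)) (at x)"
    "\<And>x. x \<in> {0..h} \<Longrightarrow> norm (\<phi>' x) \<le> B"
  shows "norm (\<phi> h - \<phi> 0) \<le> B * h"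
proof -
  have "continuous_on {0..h} \<phi>"
    by (rule has_derivative_continuous_on) (use assms(2) has_derivative_at_withinI in blast)
  from mvt_general[OF assms(1) this, of "\<lambda>x t. t *\<^sub>R \<phi>' x"] assms(2)
  obtain x where x: "x \<in> {0<..<h}" and x2: "norm (\<phi> h - \<phi> 0) \<le> norm ((h - 0) *\<^sub>R \<phi>' x)"
    by auto
  note x2
  also have "\<dots> = h * norm (\<phi>' x)" using assms(1) by simp
  also have "\<dots> \<le> h * B" using assms(3)[of x] x(1) assms(1) by (intro mult_left_mono) auto
  finally show ?thesis by (simp add: mult.commute)
qed

lemma mixed_sym:
  fixes F Fu Fv Fuu Fuv Fvu Fvv :: "real \<times> real \<Rightarrow> real^3"
  assumes U: "open U" and dF: "has_partials F Fu Fv U" and dFu: "has_partials Fu Fuu Fuv U"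
    and dFv: "has_partials Fv Fvu Fvv U" and p: "p \<in> U"
  shows "Fuv p = Fvu p"
proof -
  have "norm (Fuv p - Fvu p) \<le> 0"
  proof (rule field_le_epsilon)
    fix e :: real assume e: "e > 0"
    define \<epsilon> where "\<epsilon> = e / 6"
    have \<epsilon>: "\<epsilon> > 0" using e by (simp add: \<epsilon>_def)
    have Du: "(Fu has_derivative (\<lambda>(s, t). s *\<^sub>R Fuu p + t *\<^sub>R Fuv p)) (at p)"
      using dFu p unfolding has_partials_def by blast
    have Dv: "(Fv has_derivative (\<lambda>(s, t). s *\<^sub>R Fvu p + t *\<^sub>R Fvv p)) (at p)"
      using dFv p unfolding has_partials_def by blast
    obtain d1 where d1: "d1 > 0" "\<And>y. norm (y - p) < d1 \<Longrightarrow>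
        norm (Fu y - Fu p - (\<lambda>(s, t). s *\<^sub>R Fuu p + t *\<^sub>R Fuv p) (y - p)) \<le> \<epsilon> * norm (y - p)"
      using Du \<epsilon> unfolding has_derivative_at_alt by meson
    obtain d2 where d2: "d2 > 0" "\<And>y. norm (y - p) < d2 \<Longrightarrow>
        norm (Fv y - Fv p - (\<lambda>(s, t). s *\<^sub>R Fvu p + t *\<^sub>R Fvv p) (y - p)) \<le> \<epsilon> * norm (y - p)"
      using Dv \<epsilon> unfolding has_derivative_at_alt by meson
    obtain r where r: "r > 0" "ball p r \<subseteq> U" using U p open_contains_ball by blast
    define h where "h = min r (min d1 d2) / 4"
    have h: "h > 0" using r d1 d2 by (simp add: h_def)
    have small: "norm (x, y) < r \<and> norm (x, y) < d1 \<and> norm (x, y) < d2 \<and> norm (x, y) \<le> 2 * h"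
      if "x \<in> {0..h}" "y \<in> {0..h}" for x y
    proof -
      have "norm (x, y) \<le> norm x + norm y" by (rule norm_Pair_le)
      also have "\<dots> \<le> 2 * h" using that by auto
      finally show ?thesis using h r d1 d2 unfolding h_def by auto
    qed
    have inU: "p + (x, y) \<in> U" if "x \<in> {0..h}" "y \<in> {0..h}" for x y
    proof -
      have "dist p (p + (x, y)) = norm (x, y)"
        by (simp add: dist_norm norm_Pair)
      then have "p + (x, y) \<in> ball p r" using small[OF that] by simp
      then show ?thesis using r(2) by blast
    qed
    have DF: "(F has_derivative (\<lambda>(s, t). s *\<^sub>R Fu q + t *\<^sub>R Fv q)) (at q)" if "q \<in> U" for q
      using dF that unfolding has_partials_def by blast
    define \<Delta> where "\<Delta> = F (p + (h, h)) - F (p + (h, 0)) - F (p + (0, h)) + F (p + (0, 0))"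
    have b1: "norm (\<Delta> - (h * h) *\<^sub>R Fuv p) \<le> (3 * \<epsilon> * h) * h"
    proof -
      define \<phi> where "\<phi> = (\<lambda>x. F (p + (x, h)) - F (p + (x, 0)) - (x * h) *\<^sub>R Fuv p)"
      define \<phi>' where "\<phi>' = (\<lambda>x. Fu (p + (x, h)) - Fu (p + (x, 0)) - h *\<^sub>R Fuv p)"
      have "norm (\<phi> h - \<phi> 0) \<le> (3 * \<epsilon> * h) * h"
      proof (rule half_bound[OF h])
        fix x assume x: "x \<in> {0..h}"
        have 1: "((\<lambda>x. F (p + (x, h))) has_derivative (\<lambda>t. t *\<^sub>R Fu (p + (x, h)))) (at x)"
          by (rule path_u[OF DF[OF inU[OF x]]]) (use h in auto)
        have 2: "((\<lambda>x. F (p + (x, 0))) has_derivative (\<lambda>t. t *\<^sub>R Fu (p + (x, 0)))) (at x)"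
          by (rule path_u[OF DF[OF inU[OF x]]]) (use h in auto)
        have 3: "((\<lambda>x. (x * h) *\<^sub>R Fuv p) has_derivative (\<lambda>t. t *\<^sub>R (h *\<^sub>R Fuv p))) (at x)"
          by (auto intro!: derivative_eq_intros)
        show "(\<phi> has_derivative (\<lambda>t. t *\<^sub>R \<phi>' x)) (at x)"
          unfolding \<phi>_def \<phi>'_def using has_derivative_diff[OF has_derivative_diff[OF 1 2] 3]
          by (simp add: algebra_simps)
        have e1: "norm (Fu (p + (x, h)) - Fu p - (x *\<^sub>R Fuu p + h *\<^sub>R Fuv p)) \<le> \<epsilon> * (2 * h)"
        proof -
          have "norm (Fu (p + (x, h)) - Fu p - (x *\<^sub>R Fuu p + h *\<^sub>R Fuv p)) \<le> \<epsilon> * norm (x, h)"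
            using d1(2)[of "p + (x, h)"] small[of x h] x h by auto
          also have "\<dots> \<le> \<epsilon> * (2 * h)" using small[of x h] x h \<epsilon> by (intro mult_left_mono) auto
          finally show ?thesis .
        qed
        have e2: "norm (Fu (p + (x, 0)) - Fu p - (x *\<^sub>R Fuu p)) \<le> \<epsilon> * h"
        proof -
          have "norm (Fu (p + (x, 0)) - Fu p - (x *\<^sub>R Fuu p + 0 *\<^sub>R Fuv p)) \<le> \<epsilon> * norm (x, 0::real)"
            using d1(2)[of "p + (x, 0)"] small[of x 0] x h by auto
          also have "\<dots> \<le> \<epsilon> * h" using x \<epsilon> by (intro mult_left_mono) auto
          finally show ?thesis by simp
        qed
        have "\<phi>' x = (Fu (p + (x, h)) - Fu p - (x *\<^sub>R Fuu p + h *\<^sub>R Fuv p)) - (Fu (p + (x, 0)) - Fu p - (x *\<^sub>R Fuu p))"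
          unfolding \<phi>'_def by (simp add: algebra_simps)
        also have "norm \<dots> \<le> \<epsilon> * (2 * h) + \<epsilon> * h"
          by (rule order.trans[OF norm_triangle_ineq4]) (use e1 e2 in linarith)
        finally show "norm (\<phi>' x) \<le> 3 * \<epsilon> * h" by (simp add: algebra_simps)
      qed
      moreover have "\<phi> h - \<phi> 0 = \<Delta> - (h * h) *\<^sub>R Fuv p"
        unfolding \<phi>_def \<Delta>_def by (simp add: algebra_simps)
      ultimately show ?thesis by simp
    qed
    have b2: "norm (\<Delta> - (h * h) *\<^sub>R Fvu p) \<le> (3 * \<epsilon> * h) * h"
    proof -
      define \<phi> where "\<phi> = (\<lambda>y. F (p + (h, y)) - F (p + (0, y)) - (y * h) *\<^sub>R Fvu p)"
      define \<phi>' where "\<phi>' = (\<lambda>y. Fv (p + (h, y)) - Fv (p + (0, y)) - h *\<^sub>R Fvu p)"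
      have "norm (\<phi> h - \<phi> 0) \<le> (3 * \<epsilon> * h) * h"
      proof (rule half_bound[OF h])
        fix y assume y: "y \<in> {0..h}"
        have 1: "((\<lambda>y. F (p + (h, y))) has_derivative (\<lambda>t. t *\<^sub>R Fv (p + (h, y)))) (at y)"
          by (rule path_v[OF DF[OF inU[OF _ y]]]) (use h in auto)
        have 2: "((\<lambda>y. F (p + (0, y))) has_derivative (\<lambda>t. t *\<^sub>R Fv (p + (0, y)))) (at y)"
          by (rule path_v[OF DF[OF inU[OF _ y]]]) (use h in auto)
        have 3: "((\<lambda>y. (y * h) *\<^sub>R Fvu p) has_derivative (\<lambda>t. t *\<^sub>R (h *\<^sub>R Fvu p))) (at y)"
          by (auto intro!: derivative_eq_intros)
        show "(\<phi> has_derivative (\<lambda>t. t *\<^sub>R \<phi>' y)) (at y)"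
          unfolding \<phi>_def \<phi>'_def using has_derivative_diff[OF has_derivative_diff[OF 1 2] 3]
          by (simp add: algebra_simps)
        have e1: "norm (Fv (p + (h, y)) - Fv p - (h *\<^sub>R Fvu p + y *\<^sub>R Fvv p)) \<le> \<epsilon> * (2 * h)"
        proof -
          have "norm (Fv (p + (h, y)) - Fv p - (h *\<^sub>R Fvu p + y *\<^sub>R Fvv p)) \<le> \<epsilon> * norm (h, y)"
            using d2(2)[of "p + (h, y)"] small[of h y] y h by auto
          also have "\<dots> \<le> \<epsilon> * (2 * h)" using small[of h y] y h \<epsilon> by (intro mult_left_mono) auto
          finally show ?thesis .
        qed
        have e2: "norm (Fv (p + (0, y)) - Fv p - (y *\<^sub>R Fvv p)) \<le> \<epsilon> * h"
        proof -
          have "norm (Fv (p + (0, y)) - Fv p - (0 *\<^sub>R Fvu p + y *\<^sub>R Fvv p)) \<le> \<epsilon> * norm (0::real, y)"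
            using d2(2)[of "p + (0, y)"] small[of 0 y] y h by auto
          also have "\<dots> \<le> \<epsilon> * h" using y \<epsilon> by (intro mult_left_mono) auto
          finally show ?thesis by simp
        qed
        have "\<phi>' y = (Fv (p + (h, y)) - Fv p - (h *\<^sub>R Fvu p + y *\<^sub>R Fvv p)) - (Fv (p + (0, y)) - Fv p - (y *\<^sub>R Fvv p))"
          unfolding \<phi>'_def by (simp add: algebra_simps)
        also have "norm \<dots> \<le> \<epsilon> * (2 * h) + \<epsilon> * h"
          by (rule order.trans[OF norm_triangle_ineq4]) (use e1 e2 in linarith)
        finally show "norm (\<phi>' y) \<le> 3 * \<epsilon> * h" by (simp add: algebra_simps)
      qed
      moreover have "\<phi> h - \<phi> 0 = \<Delta> - (h * h) *\<^sub>R Fvu p"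
        unfolding \<phi>_def \<Delta>_def by (simp add: algebra_simps)
      ultimately show ?thesis by simp
    qed
    have eqd: "(h * h) *\<^sub>R (Fuv p - Fvu p) = (\<Delta> - (h * h) *\<^sub>R Fvu p) - (\<Delta> - (h * h) *\<^sub>R Fuv p)"
      by (simp add: algebra_simps)
    have "(h * h) * norm (Fuv p - Fvu p) = norm ((h * h) *\<^sub>R (Fuv p - Fvu p))"
      using h by simp
    also have "\<dots> \<le> norm (\<Delta> - (h * h) *\<^sub>R Fvu p) + norm (\<Delta> - (h * h) *\<^sub>R Fuv p)"
      unfolding eqd by (rule norm_triangle_ineq4)
    also have "\<dots> \<le> (3 * \<epsilon> * h) * h + (3 * \<epsilon> * h) * h"
      using b1 b2 by linarith
    finally have "(h * h) * norm (Fuv p - Fvu p) \<le> (3 * \<epsilon> * h) * h + (3 * \<epsilon> * h) * h" .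
    then have "(h * h) * norm (Fuv p - Fvu p) \<le> (h * h) * (6 * \<epsilon>)"
      by (simp add: algebra_simps)
    then have "norm (Fuv p - Fvu p) \<le> 6 * \<epsilon>"
      using h by (simp add: mult_le_cancel_left_pos)
    then show "norm (Fuv p - Fvu p) \<le> 0 + e" by (simp add: \<epsilon>_def)
  qed
  then show ?thesis by simp
qed
lemma inner_const_partials:
  fixes X Xu Xv Y Yu Yv :: "real \<times> real \<Rightarrow> real^3"
  assumes "open U" "has_partials X Xu Xv U" "has_partials Y Yu Yv U"
    "\<forall>q\<in>U. X q \<bullet> Y q = c" "p \<in> U"
  shows "Xu p \<bullet> Y p + X p \<bullet> Yu p = 0 \<and> Xv p \<bullet> Y p + X p \<bullet> Yv p = 0"
proof -
  have dX: "(X has_derivative (\<lambda>(s, t). s *\<^sub>R Xu p + t *\<^sub>R Xv p)) (at p)"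
    using assms(2,5) unfolding has_partials_def by blast
  have dY: "(Y has_derivative (\<lambda>(s, t). s *\<^sub>R Yu p + t *\<^sub>R Yv p)) (at p)"
    using assms(3,5) unfolding has_partials_def by blast
  have d1: "((\<lambda>q. X q \<bullet> Y q) has_derivative
     (\<lambda>h. X p \<bullet> (\<lambda>(s, t). s *\<^sub>R Yu p + t *\<^sub>R Yv p) h + (\<lambda>(s, t). s *\<^sub>R Xu p + t *\<^sub>R Xv p) h \<bullet> Y p)) (at p)"
    by (rule has_derivative_inner[OF dX dY])
  have "((\<lambda>q. c) has_derivative (\<lambda>h. 0)) (at p)" by simp
  then have d2: "((\<lambda>q. X q \<bullet> Y q) has_derivative (\<lambda>h. 0)) (at p)"
    by (rule has_derivative_transform_within_open[OF _ assms(1,5)]) (use assms(4) in auto)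
  have eq: "(\<lambda>h. X p \<bullet> (\<lambda>(s, t). s *\<^sub>R Yu p + t *\<^sub>R Yv p) h + (\<lambda>(s, t). s *\<^sub>R Xu p + t *\<^sub>R Xv p) h \<bullet> Y p) = (\<lambda>h. 0)"
    by (rule has_derivative_unique[OF d1 d2])
  from fun_cong[OF eq, of "(1,0)"] fun_cong[OF eq, of "(0,1)"] show ?thesis
    by (simp add: inner_commute)
qed

lemma det3_prod:
  fixes a b c d e g :: "real^3"
  shows "det3 a b c * det3 d e g =
    (a\<bullet>d) * (b\<bullet>e) * (c\<bullet>g) - (a\<bullet>d) * (b\<bullet>g) * (c\<bullet>e) - (a\<bullet>e) * (b\<bullet>d) * (c\<bullet>g) +
    (a\<bullet>e) * (b\<bullet>g) * (c\<bullet>d) + (a\<bullet>g) * (b\<bullet>d) * (c\<bullet>e) - (a\<bullet>g) * (b\<bullet>e) * (c\<bullet>d)"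
  (is "_ = ?rhs")
proof -
  let ?M = "vector [a, b, c] :: real^3^3"
  let ?N = "vector [d, e, g] :: real^3^3"
  have "det3 a b c * det3 d e g = det (?M ** transpose ?N)"
    unfolding det3_def det_mul det_transpose ..
  also have "\<dots> = ?rhs"
    unfolding det_3 by (simp add: matrix_matrix_mult_def transpose_def inner_vec_def sum_3 mult.commute)
  finally show ?thesis .
qed
theorem lemma3p2:
  fixes U :: "(real \<times> real) set"
    and f fu fv fuu fuv fvu fvv :: "real \<times> real \<Rightarrow> real^3"
    and \<xi> \<xi>u \<xi>v :: "real \<times> real \<Rightarrow> real^3"
    and \<nu> \<nu>u \<nu>v \<nu>uu \<nu>uv \<nu>vu \<nu>vv :: "real \<times> real \<Rightarrow> real^3"
    and \<rho> b11 b12 b21 b22 :: "real \<times> real \<Rightarrow> real"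
    and a1 a2 c1 c2 d1 d2 e1 e2 :: "real \<times> real \<Rightarrow> real"
  assumes U_open: "open U"
    and f_diff: "has_partials f fu fv U"
    and fu_diff: "has_partials fu fuu fuv U"
    and fv_diff: "has_partials fv fvu fvv U"
    and \<xi>_diff: "has_partials \<xi> \<xi>u \<xi>v U"
    and \<nu>_diff: "has_partials \<nu> \<nu>u \<nu>v U"
    and \<nu>u_diff: "has_partials \<nu>u \<nu>uu \<nu>uv U"
    and \<nu>v_diff: "has_partials \<nu>v \<nu>vu \<nu>vv U"
    \<comment> \<open>\<xi> is transversal to the immersion f\<close>
    and transversal: "\<forall>p\<in>U. det3 (fu p) (fv p) (\<xi> p) \<noteq> 0"
    \<comment> \<open>Gauss formula D_X f_*Y = f_*(\<nabla>_X Y) + h(X,Y)\<xi> in isothermal coordinates: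
        h(d_u,d_u) = h(d_v,d_v) = \<rho> > 0, h(d_u,d_v) = h(d_v,d_u) = 0\<close>
    and rho_pos: "\<forall>p\<in>U. \<rho> p > 0"
    and gauss_uu: "\<forall>p\<in>U. fuu p = a1 p *\<^sub>R fu p + a2 p *\<^sub>R fv p + \<rho> p *\<^sub>R \<xi> p"
    and gauss_uv: "\<forall>p\<in>U. fuv p = c1 p *\<^sub>R fu p + c2 p *\<^sub>R fv p"
    and gauss_vu: "\<forall>p\<in>U. fvu p = d1 p *\<^sub>R fu p + d2 p *\<^sub>R fv p"
    and gauss_vv: "\<forall>p\<in>U. fvv p = e1 p *\<^sub>R fu p + e2 p *\<^sub>R fv p + \<rho> p *\<^sub>R \<xi> p"
    \<comment> \<open>Weingarten formula for an equiaffine \<xi> (\<tau> = 0), with shape operator matrix (b_ij)\<close>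
    and weingarten_u: "\<forall>p\<in>U. \<xi>u p = - b11 p *\<^sub>R fu p - b21 p *\<^sub>R fv p"
    and weingarten_v: "\<forall>p\<in>U. \<xi>v p = - b12 p *\<^sub>R fu p - b22 p *\<^sub>R fv p"
    \<comment> \<open>co-normal\<close>
    and conormal: "\<forall>p\<in>U. \<nu> p \<bullet> fu p = 0 \<and> \<nu> p \<bullet> fv p = 0 \<and> \<nu> p \<bullet> \<xi> p = 1"
  shows "\<forall>p\<in>U.
     (let \<delta> = det3 (fu p) (fv p) (\<xi> p) * det3 (\<nu> p) (\<nu>u p) (\<nu>v p) / \<rho> p in
        b11 p = - (\<nu>uu p \<bullet> \<xi> p) / \<delta> \<and> b12 p = - (\<nu>uv p \<bullet> \<xi> p) / \<delta> \<and>
        b21 p = - (\<nu>uv p \<bullet> \<xi> p) / \<delta> \<and> b22 p = - (\<nu>vv p \<bullet> \<xi> p) / \<delta>)"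
proof
  fix p assume p: "p \<in> U"
  have nuxi: "\<nu>u q \<bullet> \<xi> q = 0 \<and> \<nu>v q \<bullet> \<xi> q = 0" if q: "q \<in> U" for q
  proof -
    have "\<nu>u q \<bullet> \<xi> q + \<nu> q \<bullet> \<xi>u q = 0 \<and> \<nu>v q \<bullet> \<xi> q + \<nu> q \<bullet> \<xi>v q = 0"
      by (rule inner_const_partials[OF U_open \<nu>_diff \<xi>_diff _ q, of 1]) (use conormal in blast)
    moreover have "\<nu> q \<bullet> \<xi>u q = 0" "\<nu> q \<bullet> \<xi>v q = 0"
      using weingarten_u weingarten_v conormal q by (simp_all add: inner_diff_right inner_minus_right)
    ultimately show ?thesis by simp
  qed
  have A: "\<nu>u p \<bullet> fu p + \<nu> p \<bullet> fuu p = 0 \<and> \<nu>v p \<bullet> fu p + \<nu> p \<bullet> fuv p = 0"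
    by (rule inner_const_partials[OF U_open \<nu>_diff fu_diff _ p, of 0]) (use conormal in blast)
  have B: "\<nu>u p \<bullet> fv p + \<nu> p \<bullet> fvu p = 0 \<and> \<nu>v p \<bullet> fv p + \<nu> p \<bullet> fvv p = 0"
    by (rule inner_const_partials[OF U_open \<nu>_diff fv_diff _ p, of 0]) (use conormal in blast)
  have C: "\<nu>uu p \<bullet> \<xi> p + \<nu>u p \<bullet> \<xi>u p = 0 \<and> \<nu>uv p \<bullet> \<xi> p + \<nu>u p \<bullet> \<xi>v p = 0"
    by (rule inner_const_partials[OF U_open \<nu>u_diff \<xi>_diff _ p, of 0]) (use nuxi in blast)
  have D: "\<nu>vu p \<bullet> \<xi> p + \<nu>v p \<bullet> \<xi>u p = 0 \<and> \<nu>vv p \<bullet> \<xi> p + \<nu>v p \<bullet> \<xi>v p = 0"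
    by (rule inner_const_partials[OF U_open \<nu>v_diff \<xi>_diff _ p, of 0]) (use nuxi in blast)
  have S: "\<nu>uv p = \<nu>vu p" by (rule mixed_sym[OF U_open \<nu>_diff \<nu>u_diff \<nu>v_diff p])
  define R where "R = \<rho> p"
  have R: "R > 0" using rho_pos p by (simp add: R_def)
  have c0: "\<nu> p \<bullet> fu p = 0" "\<nu> p \<bullet> fv p = 0" "\<nu> p \<bullet> \<xi> p = 1" using conormal p by auto
  have n1: "\<nu> p \<bullet> fuu p = R" "\<nu> p \<bullet> fuv p = 0" "\<nu> p \<bullet> fvu p = 0" "\<nu> p \<bullet> fvv p = R"
    using gauss_uu gauss_uv gauss_vu gauss_vv p c0 by (simp_all add: R_def inner_add_right)
  have d1: "\<nu>u p \<bullet> fu p = - R" "\<nu>v p \<bullet> fu p = 0" "\<nu>u p \<bullet> fv p = 0" "\<nu>v p \<bullet> fv p = - R"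
    using A B n1 by linarith+
  have d0: "\<nu>u p \<bullet> \<xi> p = 0" "\<nu>v p \<bullet> \<xi> p = 0" using nuxi p by auto
  have xu: "\<xi>u p = - b11 p *\<^sub>R fu p - b21 p *\<^sub>R fv p" "\<xi>v p = - b12 p *\<^sub>R fu p - b22 p *\<^sub>R fv p"
    using weingarten_u weingarten_v p by auto
  have s1: "\<nu>uu p \<bullet> \<xi> p = - R * b11 p" using C d1 xu
    by (simp add: inner_diff_right inner_minus_right algebra_simps)
  have s2: "\<nu>uv p \<bullet> \<xi> p = - R * b12 p" using C d1 xu
    by (simp add: inner_diff_right inner_minus_right algebra_simps)
  have s3: "\<nu>uv p \<bullet> \<xi> p = - R * b21 p" using D d1 xu S
    by (simp add: inner_diff_right inner_minus_right inner_commute algebra_simps)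
  have s4: "\<nu>vv p \<bullet> \<xi> p = - R * b22 p" using D d1 xu
    by (simp add: inner_diff_right inner_minus_right inner_commute algebra_simps)
  have det: "det3 (fu p) (fv p) (\<xi> p) * det3 (\<nu> p) (\<nu>u p) (\<nu>v p) = R * R"
    unfolding det3_prod using c0 d1 d0 by (simp add: inner_commute)
  have delta: "det3 (fu p) (fv p) (\<xi> p) * det3 (\<nu> p) (\<nu>u p) (\<nu>v p) / \<rho> p = R"
    using det R by (simp add: R_def)
  show "let \<delta> = det3 (fu p) (fv p) (\<xi> p) * det3 (\<nu> p) (\<nu>u p) (\<nu>v p) / \<rho> p in
        b11 p = - (\<nu>uu p \<bullet> \<xi> p) / \<delta> \<and> b12 p = - (\<nu>uv p \<bullet> \<xi> p) / \<delta> \<and>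
        b21 p = - (\<nu>uv p \<bullet> \<xi> p) / \<delta> \<and> b22 p = - (\<nu>vv p \<bullet> \<xi> p) / \<delta>"
    unfolding Let_def delta s1 s2 s4 using s3 s2 R by auto
qed

end
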